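(* Let $G$ be a countable vertex set with fixed vertex $o$, and let $c,b$ be conductance functions on $G$ with $b_{xy}\le c_{xy}$ for all $x,y$, such that $(G,c)$ and $(G,b)$ are connected locally finite networks. Let $\mathcal I:\mathcal H_{\mathcal E_c}\to\mathcal H_{\mathcal E_b}$ be the inclusion and $\mathcal I^*$ its adjoint. Then $\Delta_b=\mathcal I\Delta_c\mathcal I^*$.
   Context: A conductance function on a countable set $G$ is a symmetric map $c:G\times G\to[0,\infty)$ with $c_{xx}=0$; $x\sim y$ iff $c_{xy}>0$; locally finite and connected. $\mathcal E_c(u,v)=\frac12\sum_{x,y}c_{xy}\overline{(u(x)-u(y))}(v(x)-v(y))$; $\mathcal H_{\mathcal E_c}$ is the Hilbert space of finite-energy functions modulo constants with inner product $\mathcal E_c$. $v_x^{(c)}$ is the unique element of $\mathcal H_{\mathcal E_c}$ with $\langle v_x^{(c)},u\rangle_{\mathcal E_c}=u(x)-u(o)$ for all $u$. The Laplacian $(\Delta_c v)(x)=\sum_{y\sim x}c_{xy}(v(x)-v(y))$ is considered as an operator on $\mathcal H_{\mathcal E_c}$ with domain $\mathrm{span}\{v_x^{(c)}\}_{x\in G}$. Same notation for $b$. *)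

theory Defs
  imports "HOL-Analysis.Analysis" "HOL-Library.Countable"
begin

definition conductance :: "('a \<Rightarrow> 'a \<Rightarrow> real) \<Rightarrow> bool" where
  "conductance c \<longleftrightarrow> (\<forall>x y. c x y = c y x) \<and> (\<forall>x y. 0 \<le> c x y) \<and> (\<forall>x. c x x = 0)"

definition locally_finite_net :: "('a \<Rightarrow> 'a \<Rightarrow> real) \<Rightarrow> bool" where
  "locally_finite_net c \<longleftrightarrow> (\<forall>x. finite {y. 0 < c x y})"

definition connected_net :: "('a \<Rightarrow> 'a \<Rightarrow> real) \<Rightarrow> bool" where
  "connected_net c \<longleftrightarrow> (\<forall>x y. (\<lambda>u v. 0 < c u v)\<^sup>*\<^sup>* x y)"

definition network :: "('a \<Rightarrow> 'a \<Rightarrow> real) \<Rightarrow> bool" where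
  "network c \<longleftrightarrow> conductance c \<and> locally_finite_net c \<and> connected_net c"

definition fin_energy :: "('a \<Rightarrow> 'a \<Rightarrow> real) \<Rightarrow> ('a \<Rightarrow> complex) \<Rightarrow> bool" where
  "fin_energy c u \<longleftrightarrow> (\<lambda>(x, y). c x y * (cmod (u x - u y))\<^sup>2) summable_on UNIV"

definition energy :: "('a \<Rightarrow> 'a \<Rightarrow> real) \<Rightarrow> ('a \<Rightarrow> complex) \<Rightarrow> ('a \<Rightarrow> complex) \<Rightarrow> complex" where
  "energy c u v = (1/2) * infsum (\<lambda>(x, y). complex_of_real (c x y) * cnj (u x - u y) * (v x - v y)) UNIV"

text \<open>Equality in H_E (functions modulo constants).\<close>
definition mod_const :: "('a \<Rightarrow> complex) \<Rightarrow> ('a \<Rightarrow> complex) \<Rightarrow> bool" where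
  "mod_const f g \<longleftrightarrow> (\<exists>k. \<forall>z. f z = g z + k)"

definition is_vx :: "('a \<Rightarrow> 'a \<Rightarrow> real) \<Rightarrow> 'a \<Rightarrow> 'a \<Rightarrow> ('a \<Rightarrow> complex) \<Rightarrow> bool" where
  "is_vx c o0 x v \<longleftrightarrow> fin_energy c v \<and> (\<forall>u. fin_energy c u \<longrightarrow> energy c v u = u x - u o0)"

definition vx :: "('a \<Rightarrow> 'a \<Rightarrow> real) \<Rightarrow> 'a \<Rightarrow> 'a \<Rightarrow> ('a \<Rightarrow> complex)" where
  "vx c o0 x = (SOME v. is_vx c o0 x v)"

text \<open>Domain of the Laplacian: span of the v_x, as a set of representatives.\<close>
definition lap_dom :: "('a \<Rightarrow> 'a \<Rightarrow> real) \<Rightarrow> 'a \<Rightarrow> ('a \<Rightarrow> complex) set" where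
  "lap_dom c o0 = {u. \<exists>S a. finite S \<and> mod_const u (\<lambda>z. \<Sum>x\<in>S. a x * vx c o0 x z)}"

definition laplacian :: "('a \<Rightarrow> 'a \<Rightarrow> real) \<Rightarrow> ('a \<Rightarrow> complex) \<Rightarrow> ('a \<Rightarrow> complex)" where
  "laplacian c v x = (\<Sum>y\<in>{y. 0 < c x y}. complex_of_real (c x y) * (v x - v y))"

text \<open>w represents I^* u, where I : H_{E_c} -> H_{E_b} is the inclusion:
  <I^* u, z>_{E_c} = <u, I z>_{E_b} for all z in H_{E_c}.\<close>
definition incl_adj :: "('a \<Rightarrow> 'a \<Rightarrow> real) \<Rightarrow> ('a \<Rightarrow> 'a \<Rightarrow> real) \<Rightarrow> ('a \<Rightarrow> complex) \<Rightarrow> ('a \<Rightarrow> complex) \<Rightarrow> bool" where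
  "incl_adj c b u w \<longleftrightarrow> fin_energy c w \<and> (\<forall>z. fin_energy c z \<longrightarrow> energy c w z = energy b u z)"

end

theory Submission
  imports Defs
begin

definition esum :: "('a \<Rightarrow> 'a \<Rightarrow> real) \<Rightarrow> ('a \<Rightarrow> complex) \<Rightarrow> ('a \<Rightarrow> complex) \<Rightarrow> 'a \<times> 'a \<Rightarrow> complex" where
  "esum c u v = (\<lambda>(x, y). complex_of_real (c x y) * cnj (u x - u y) * (v x - v y))"

definition qsum :: "('a \<Rightarrow> 'a \<Rightarrow> real) \<Rightarrow> ('a \<Rightarrow> complex) \<Rightarrow> 'a \<times> 'a \<Rightarrow> real" where
  "qsum c u = (\<lambda>(x, y). c x y * (cmod (u x - u y))\<^sup>2)"

definition qe :: "('a \<Rightarrow> 'a \<Rightarrow> real) \<Rightarrow> ('a \<Rightarrow> complex) \<Rightarrow> real" where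
  "qe c u = infsum (qsum c u) UNIV"

lemma energy_esum: "energy c u v = 1/2 * infsum (esum c u v) UNIV"
  by (simp add: energy_def esum_def)

lemma fe_def': "fin_energy c u \<longleftrightarrow> qsum c u summable_on UNIV"
  by (simp add: fin_energy_def qsum_def)

lemma cond_nonneg: "conductance c \<Longrightarrow> 0 \<le> c x y" by (simp add: conductance_def)
lemma cond_sym: "conductance c \<Longrightarrow> c x y = c y x" by (simp add: conductance_def)

lemma qsum_nonneg: "conductance c \<Longrightarrow> 0 \<le> qsum c u p"
  by (cases p) (simp add: qsum_def cond_nonneg)

lemma qe_nonneg: "conductance c \<Longrightarrow> 0 \<le> qe c u"
  unfolding qe_def by (rule infsum_nonneg) (simp add: qsum_nonneg)

lemma esum_summable:
  assumes c: "conductance c" and u: "fin_energy c u" and v: "fin_energy c v"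
  shows "esum c u v summable_on UNIV"
proof -
  have g: "(\<lambda>p. qsum c u p + qsum c v p) summable_on UNIV"
    using u v unfolding fe_def' by (rule summable_on_add)
  have "(\<lambda>p. norm (esum c u v p)) summable_on UNIV"
  proof (rule summable_on_comparison_test[OF g])
    fix p :: "'a \<times> 'a" obtain x y where p: "p = (x,y)" by (cases p)
    have cx: "0 \<le> c x y" using c by (simp add: conductance_def)
    have cm: "cmod (cnj (u x) - cnj (u y)) = cmod (u x - u y)" using complex_mod_cnj[of "u x - u y"] by simp
    have "norm (esum c u v p) = c x y * (cmod (u x - u y) * cmod (v x - v y))"
      using cx by (simp add: norm_mult p esum_def cm)
    also have "\<dots> \<le> c x y * ((cmod (u x - u y))\<^sup>2 + (cmod (v x - v y))\<^sup>2)"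
    proof (rule mult_left_mono[OF _ cx])
      have "2 * cmod (u x - u y) * cmod (v x - v y) \<le> (cmod (u x - u y))\<^sup>2 + (cmod (v x - v y))\<^sup>2"
        by (rule sum_squares_bound)
      moreover have "0 \<le> cmod (u x - u y) * cmod (v x - v y)" by simp
      ultimately show "cmod (u x - u y) * cmod (v x - v y) \<le> (cmod (u x - u y))\<^sup>2 + (cmod (v x - v y))\<^sup>2"
        by linarith
    qed
    also have "\<dots> = qsum c u p + qsum c v p" by (simp add: p qsum_def algebra_simps)
    finally show "norm (esum c u v p) \<le> qsum c u p + qsum c v p" .
  qed simp
  then show ?thesis by (rule abs_summable_summable)
qed

lemma fe_add:
  assumes c: "conductance c" and u: "fin_energy c u" and v: "fin_energy c v"
  shows "fin_energy c (\<lambda>z. u z + v z)"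
proof -
  have g: "(\<lambda>p. 2 * qsum c u p + 2 * qsum c v p) summable_on UNIV"
    using u v unfolding fe_def' by (intro summable_on_add[OF summable_on_cmult_right summable_on_cmult_right])
  show ?thesis unfolding fe_def'
  proof (rule summable_on_comparison_test[OF g])
    fix p :: "'a \<times> 'a" obtain x y where p: "p = (x,y)" by (cases p)
    have cx: "0 \<le> c x y" using c by (simp add: conductance_def)
    have "(cmod (u x + v x - (u y + v y)))\<^sup>2 \<le> (cmod (u x - u y) + cmod (v x - v y))\<^sup>2"
    proof -
      have "cmod (u x + v x - (u y + v y)) \<le> cmod (u x - u y) + cmod (v x - v y)"
        by (metis add_diff_add norm_triangle_ineq)
      then show ?thesis by (simp add: power_mono)
    qed
    also have "\<dots> \<le> 2 * (cmod (u x - u y))\<^sup>2 + 2 * (cmod (v x - v y))\<^sup>2"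
      using sum_squares_bound[of "cmod (u x - u y)" "cmod (v x - v y)"]
      by (simp add: power2_eq_square algebra_simps)
    finally have "c x y * (cmod (u x + v x - (u y + v y)))\<^sup>2 \<le> c x y * (2 * (cmod (u x - u y))\<^sup>2 + 2 * (cmod (v x - v y))\<^sup>2)"
      using cx by (rule mult_left_mono)
    then show "qsum c (\<lambda>z. u z + v z) p \<le> 2 * qsum c u p + 2 * qsum c v p"
      by (simp add: p qsum_def algebra_simps)
  qed (simp add: qsum_nonneg c)
qed

lemma fe_scal:
  assumes u: "fin_energy c u"
  shows "fin_energy c (\<lambda>z. k * u z)"
proof -
  have "qsum c (\<lambda>z. k * u z) = (\<lambda>p. (cmod k)\<^sup>2 * qsum c u p)"
    by (auto simp: qsum_def fun_eq_iff right_diff_distrib[symmetric] norm_mult power_mult_distrib)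
  then show ?thesis using u by (simp add: fe_def' summable_on_cmult_right)
qed

lemma fe_cong:
  assumes "\<And>a b. u a - u b = u' a - u' b"
  shows "fin_energy c u \<longleftrightarrow> fin_energy c u'"
  using assms by (simp add: fin_energy_def)

lemma fe_zero: "fin_energy c (\<lambda>z. 0)"
  by (simp add: fin_energy_def case_prod_unfold)

lemma fe_minus:
  assumes c: "conductance c" and u: "fin_energy c u" and v: "fin_energy c v"
  shows "fin_energy c (\<lambda>z. u z - v z)"
  using fe_add[OF c u fe_scal[OF v, of "-1"]] by simp

lemma fe_sum:
  assumes c: "conductance c" and S: "finite S" and f: "\<And>x. x \<in> S \<Longrightarrow> fin_energy c (f x)"
  shows "fin_energy c (\<lambda>z. \<Sum>x\<in>S. a x * f x z)"
  using S f
proof (induction S rule: finite_induct)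
  case empty then show ?case by (simp add: fe_zero)
next
  case (insert x F)
  then show ?case by (simp add: fe_add[OF c] fe_scal)
qed

lemma fe_mono:
  assumes b: "conductance b" and le: "\<And>x y. b x y \<le> c x y" and u: "fin_energy c u"
  shows "fin_energy b u"
  unfolding fe_def'
proof (rule summable_on_comparison_test[of "qsum c u"])
  show "qsum c u summable_on UNIV" using u by (simp add: fe_def')
  fix p :: "'a \<times> 'a" obtain x y where p: "p = (x,y)" by (cases p)
  show "qsum b u p \<le> qsum c u p" by (simp add: p qsum_def mult_right_mono le)
  show "0 \<le> qsum b u p" by (simp add: qsum_nonneg b)
qed

lemma energy_add2:
  assumes c: "conductance c" and u: "fin_energy c u" and v: "fin_energy c v" and w: "fin_energy c w"
  shows "energy c u (\<lambda>z. v z + w z) = energy c u v + energy c u w"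
proof -
  have "esum c u (\<lambda>z. v z + w z) = (\<lambda>p. esum c u v p + esum c u w p)"
    by (auto simp: esum_def fun_eq_iff algebra_simps)
  then show ?thesis
    by (simp add: energy_esum infsum_add esum_summable[OF c u v] esum_summable[OF c u w] algebra_simps)
qed

lemma energy_scal2: "energy c u (\<lambda>z. k * v z) = k * energy c u v"
proof -
  have "esum c u (\<lambda>z. k * v z) = (\<lambda>p. k * esum c u v p)"
    by (auto simp: esum_def fun_eq_iff algebra_simps)
  then show ?thesis by (simp add: energy_esum infsum_cmult_right')
qed

lemma energy_cnj: "energy c v u = cnj (energy c u v)"
proof -
  have "esum c v u = (\<lambda>p. cnj (esum c u v p))"
    by (auto simp: esum_def fun_eq_iff algebra_simps)
  then show ?thesis by (simp add: energy_esum)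
qed

lemma energy_add1:
  assumes c: "conductance c" and u: "fin_energy c u" and v: "fin_energy c v" and w: "fin_energy c w"
  shows "energy c (\<lambda>z. v z + w z) u = energy c v u + energy c w u"
  by (metis energy_cnj energy_add2[OF c u v w] complex_cnj_add)

lemma energy_scal1: "energy c (\<lambda>z. k * v z) u = cnj k * energy c v u"
  by (metis energy_cnj energy_scal2 complex_cnj_mult)

lemma energy_cong1:
  assumes "\<And>a b. u a - u b = u' a - u' b"
  shows "energy c u v = energy c u' v"
  using assms by (simp add: energy_def)

lemma energy_cong2:
  assumes "\<And>a b. u a - u b = u' a - u' b"
  shows "energy c v u = energy c v u'"
  using assms by (simp add: energy_def)

lemma energy_minus2:
  assumes c: "conductance c" and u: "fin_energy c u" and v: "fin_energy c v" and w: "fin_energy c w"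
  shows "energy c u (\<lambda>z. v z - w z) = energy c u v - energy c u w"
  using energy_add2[OF c u v fe_scal[OF w, of "-1"]] energy_scal2[of c u "-1" w] by simp

lemma energy_minus1:
  assumes c: "conductance c" and u: "fin_energy c u" and v: "fin_energy c v" and w: "fin_energy c w"
  shows "energy c (\<lambda>z. v z - w z) u = energy c v u - energy c w u"
  by (metis energy_cnj energy_minus2[OF c u v w] complex_cnj_diff)

lemma energy_sum1:
  assumes c: "conductance c" and S: "finite S" and f: "\<And>x. x \<in> S \<Longrightarrow> fin_energy c (f x)"
    and u: "fin_energy c u"
  shows "energy c (\<lambda>z. \<Sum>x\<in>S. a x * f x z) u = (\<Sum>x\<in>S. cnj (a x) * energy c (f x) u)"
  using S f
proof (induction S rule: finite_induct)
  case empty then show ?case by (simp add: energy_def case_prod_unfold)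
next
  case (insert x F)
  have "energy c (\<lambda>z. \<Sum>x\<in>insert x F. a x * f x z) u = energy c (\<lambda>z. a x * f x z + (\<Sum>x\<in>F. a x * f x z)) u"
    using insert by simp
  also have "\<dots> = energy c (\<lambda>z. a x * f x z) u + energy c (\<lambda>z. \<Sum>x\<in>F. a x * f x z) u"
    using insert by (intro energy_add1[OF c u] fe_scal fe_sum[OF c]) auto
  finally show ?case using insert by (simp add: energy_scal1)
qed

lemma energy_self:
  assumes u: "fin_energy c u"
  shows "energy c u u = complex_of_real (qe c u / 2)"
proof -
  have cz: "\<And>z. cnj z * z = complex_of_real ((cmod z)\<^sup>2)" by (metis complex_norm_square mult.commute)
  have "esum c u u = (\<lambda>p. complex_of_real (qsum c u p))"
    unfolding esum_def qsum_def fun_eq_iff by (simp add: mult.assoc cz del: complex_cnj_diff)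
  moreover have "infsum (\<lambda>p. complex_of_real (qsum c u p)) UNIV = complex_of_real (qe c u)"
    unfolding qe_def using u unfolding fe_def' by (rule infsumI[OF has_sum_of_real[OF has_sum_infsum]])
  ultimately show ?thesis by (simp add: energy_esum)
qed

lemma qsum_le_qe:
  assumes c: "conductance c" and f: "fin_energy c f"
  shows "c x y * (cmod (f x - f y))\<^sup>2 \<le> qe c f"
proof -
  have "sum (qsum c f) {(x,y)} \<le> infsum (qsum c f) UNIV"
    using f c by (intro finite_sum_le_infsum) (auto simp: fe_def' qsum_nonneg)
  then show ?thesis by (simp add: qe_def qsum_def)
qed

lemma qe_zero_edge:
  assumes c: "conductance c" and f: "fin_energy c f" and q: "qe c f = 0" and e: "0 < c x y"
  shows "f x = f y"
proof -
  have "c x y * (cmod (f x - f y))\<^sup>2 \<le> 0" using qsum_le_qe[OF c f, of x y] q by simp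
  with e have "(cmod (f x - f y))\<^sup>2 \<le> 0" by (simp add: mult_le_0_iff)
  then show ?thesis by simp
qed

lemma qe_zero_const:
  assumes c: "conductance c" and cn: "connected_net c" and f: "fin_energy c f" and q: "qe c f = 0"
  shows "f z = f o0"
proof -
  have "(\<lambda>u v. 0 < c u v)\<^sup>*\<^sup>* o0 z" using cn by (simp add: connected_net_def)
  then have "f o0 = f z"
  proof (induction rule: rtranclp_induct)
    case base then show ?case by simp
  next
    case (step y z) then show ?case using qe_zero_edge[OF c f q, of y z] by simp
  qed
  then show ?thesis by simp
qed

lemma path_bound:
  assumes c: "conductance c" and cn: "connected_net c"
  shows "\<exists>K\<ge>0. \<forall>f. fin_energy c f \<longrightarrow> cmod (f z - f o0) \<le> K * sqrt (qe c f)"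
proof -
  have "(\<lambda>u v. 0 < c u v)\<^sup>*\<^sup>* o0 z" using cn by (simp add: connected_net_def)
  then show ?thesis
  proof (induction rule: rtranclp_induct)
    case base then show ?case by (intro exI[of _ 0]) simp
  next
    case (step y z)
    then obtain K where K: "K \<ge> 0" "\<And>f. fin_energy c f \<Longrightarrow> cmod (f y - f o0) \<le> K * sqrt (qe c f)" by blast
    have cy: "0 < c y z" using step by simp
    show ?case
    proof (intro exI[of _ "K + 1 / sqrt (c y z)"] conjI allI impI)
      show "0 \<le> K + 1 / sqrt (c y z)" using K cy by simp
      fix f assume f: "fin_energy c f"
      have "c y z * (cmod (f y - f z))\<^sup>2 \<le> qe c f" by (rule qsum_le_qe[OF c f])
      then have "(cmod (f y - f z))\<^sup>2 \<le> qe c f / c y z" using cy by (simp add: field_simps)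
      then have "cmod (f y - f z) \<le> sqrt (qe c f / c y z)" by (simp add: real_le_rsqrt)
      also have "\<dots> = 1 / sqrt (c y z) * sqrt (qe c f)" by (simp add: real_sqrt_divide)
      finally have h1: "cmod (f z - f y) \<le> 1 / sqrt (c y z) * sqrt (qe c f)" by (simp add: norm_minus_commute)
      have "cmod (f z - f o0) \<le> cmod (f z - f y) + cmod (f y - f o0)"
        by (metis diff_add_cancel norm_triangle_ineq add_diff_eq diff_diff_eq2)
      also have "\<dots> \<le> 1 / sqrt (c y z) * sqrt (qe c f) + K * sqrt (qe c f)" using h1 K(2)[OF f] by simp
      finally show "cmod (f z - f o0) \<le> (K + 1 / sqrt (c y z)) * sqrt (qe c f)" by (simp add: algebra_simps)
    qed
  qed
qed

definition delta :: "'a \<Rightarrow> 'a \<Rightarrow> complex" where "delta y = (\<lambda>z. if z = y then 1 else 0)"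

lemma esum_delta:
  assumes c: "conductance c"
  shows "esum c (delta y) v = (\<lambda>p. (if fst p = y then complex_of_real (c y (snd p)) * (v y - v (snd p)) else 0)
       + (if snd p = y then complex_of_real (c y (fst p)) * (v y - v (fst p)) else 0))"
proof
  fix p :: "'a \<times> 'a" obtain a b where p: "p = (a,b)" by (cases p)
  show "esum c (delta y) v p = (if fst p = y then complex_of_real (c y (snd p)) * (v y - v (snd p)) else 0)
       + (if snd p = y then complex_of_real (c y (fst p)) * (v y - v (fst p)) else 0)"
    using cond_sym[OF c, of a y] c
    by (auto simp: p esum_def delta_def conductance_def algebra_simps)
qed

lemma finsupp_infsum:
  assumes "finite S" and "\<And>p. p \<notin> S \<Longrightarrow> f p = 0"
  shows "f summable_on UNIV" and "infsum f UNIV = sum f S"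
proof -
  have e: "infsum f UNIV = infsum f S" by (rule infsum_cong_neutral) (use assms in auto)
  have s: "f summable_on UNIV \<longleftrightarrow> f summable_on S" by (rule summable_on_cong_neutral) (use assms in auto)
  show "f summable_on UNIV" using s assms by simp
  show "infsum f UNIV = sum f S" using e assms by simp
qed

lemma lap_delta:
  assumes c: "conductance c" and lf: "locally_finite_net c"
  shows "energy c (delta y) v = laplacian c v y"
proof -
  define N where "N = {b. 0 < c y b}"
  have N: "finite N" using lf by (simp add: locally_finite_net_def N_def)
  have cz: "\<And>b. b \<notin> N \<Longrightarrow> c y b = 0"
  proof -
    fix b assume "b \<notin> N" hence "\<not> 0 < c y b" by (simp add: N_def)
    with cond_nonneg[OF c, of y b] show "c y b = 0" by simp
  qed
  define g where "g = (\<lambda>p. if fst p = y then complex_of_real (c y (snd p)) * (v y - v (snd p)) else (0::complex))"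
  define h where "h = (\<lambda>p. if snd p = y then complex_of_real (c y (fst p)) * (v y - v (fst p)) else (0::complex))"
  have g0: "\<And>p. p \<notin> Pair y ` N \<Longrightarrow> g p = 0" using cz by (auto simp: g_def image_iff)
  have h0: "\<And>p. p \<notin> (\<lambda>a. (a,y)) ` N \<Longrightarrow> h p = 0" using cz by (auto simp: h_def image_iff)
  have gs: "g summable_on UNIV" "infsum g UNIV = sum g (Pair y ` N)"
    using finsupp_infsum[of "Pair y ` N" g] N g0 by auto
  have hs: "h summable_on UNIV" "infsum h UNIV = sum h ((\<lambda>a. (a,y)) ` N)"
    using finsupp_infsum[of "(\<lambda>a. (a,y)) ` N" h] N h0 by auto
  have L: "laplacian c v y = (\<Sum>b\<in>N. complex_of_real (c y b) * (v y - v b))"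
    by (simp add: laplacian_def N_def)
  have sg: "sum g (Pair y ` N) = laplacian c v y"
    by (simp add: L sum.reindex inj_on_def g_def)
  have sh: "sum h ((\<lambda>a. (a,y)) ` N) = laplacian c v y"
    by (simp add: L sum.reindex inj_on_def h_def)
  have "esum c (delta y) v = (\<lambda>p. g p + h p)" using esum_delta[OF c] by (simp add: g_def h_def)
  then have "infsum (esum c (delta y) v) UNIV = infsum g UNIV + infsum h UNIV"
    using gs hs by (simp add: infsum_add)
  then show ?thesis using gs hs sg sh by (simp add: energy_esum)
qed

lemma fe_delta:
  assumes c: "conductance c" and lf: "locally_finite_net c"
  shows "fin_energy c (delta y)"
proof -
  define N where "N = {b. 0 < c y b}"
  have N: "finite N" using lf by (simp add: locally_finite_net_def N_def)
  have cz: "\<And>b. b \<notin> N \<Longrightarrow> c y b = 0"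
  proof -
    fix b assume "b \<notin> N" hence "\<not> 0 < c y b" by (simp add: N_def)
    with cond_nonneg[OF c, of y b] show "c y b = 0" by simp
  qed
  have z: "qsum c (delta y) p = 0" if "p \<notin> Pair y ` N \<union> (\<lambda>a. (a,y)) ` N" for p
  proof -
    obtain a b where p: "p = (a,b)" by (cases p)
    show ?thesis
    proof (cases "a = y")
      case True
      then show ?thesis using that cz[of b] by (auto simp: p qsum_def delta_def)
    next
      case False
      then show ?thesis using that cz[of a] cond_sym[OF c, of a y] by (auto simp: p qsum_def delta_def)
    qed
  qed
  show ?thesis unfolding fe_def' by (rule finsupp_infsum(1)[of "Pair y ` N \<union> (\<lambda>a. (a,y)) ` N"]) (use N z in auto)
qed

lemma qe_scal:
  assumes u: "fin_energy c u"
  shows "qe c (\<lambda>z. k * u z) = (cmod k)\<^sup>2 * qe c u"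
proof -
  have "qsum c (\<lambda>z. k * u z) = (\<lambda>p. (cmod k)\<^sup>2 * qsum c u p)"
    by (auto simp: qsum_def fun_eq_iff right_diff_distrib[symmetric] norm_mult power_mult_distrib)
  then show ?thesis by (simp add: qe_def infsum_cmult_right')
qed

lemma cpar: "(cmod (a + b))\<^sup>2 + (cmod (a - b))\<^sup>2 = 2 * (cmod a)\<^sup>2 + 2 * (cmod (b::complex))\<^sup>2"
  unfolding cmod_power2 by (simp add: power2_eq_square algebra_simps)

lemma qe_par:
  assumes c: "conductance c" and u: "fin_energy c u" and w: "fin_energy c w"
  shows "qe c (\<lambda>z. u z + w z) + qe c (\<lambda>z. u z - w z) = 2 * qe c u + 2 * qe c w"
proof -
  have s1: "qsum c (\<lambda>z. u z + w z) summable_on UNIV" using fe_add[OF c u w] by (simp add: fe_def')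
  have s2: "qsum c (\<lambda>z. u z - w z) summable_on UNIV" using fe_minus[OF c u w] by (simp add: fe_def')
  have s3: "qsum c u summable_on UNIV" "qsum c w summable_on UNIV" using u w by (simp_all add: fe_def')
  have eq: "(\<lambda>p. qsum c (\<lambda>z. u z + w z) p + qsum c (\<lambda>z. u z - w z) p) = (\<lambda>p. 2 * qsum c u p + 2 * qsum c w p)"
  proof
    fix p :: "'a \<times> 'a" obtain x y where p: "p = (x,y)" by (cases p)
    have a: "u x + w x - (u y + w y) = (u x - u y) + (w x - w y)" by simp
    have b: "u x - w x - (u y - w y) = (u x - u y) - (w x - w y)" by simp
    show "qsum c (\<lambda>z. u z + w z) p + qsum c (\<lambda>z. u z - w z) p = 2 * qsum c u p + 2 * qsum c w p"
      unfolding p qsum_def prod.case a b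
      using cpar[of "u x - u y" "w x - w y"] by (simp add: algebra_simps)
         (metis distrib_left mult.left_commute)
  qed
  have "qe c (\<lambda>z. u z + w z) + qe c (\<lambda>z. u z - w z) = infsum (\<lambda>p. qsum c (\<lambda>z. u z + w z) p + qsum c (\<lambda>z. u z - w z) p) UNIV"
    unfolding qe_def by (rule infsum_add[OF s1 s2, symmetric])
  also have "\<dots> = infsum (\<lambda>p. 2 * qsum c u p + 2 * qsum c w p) UNIV" by (simp only: eq)
  also have "\<dots> = 2 * qe c u + 2 * qe c w"
    unfolding qe_def
    by (simp add: infsum_add[OF summable_on_cmult_right[OF s3(1)] summable_on_cmult_right[OF s3(2)]] infsum_cmult_right')
  finally show ?thesis .
qed

lemma path_bound2:
  assumes c: "conductance c" and cn: "connected_net c"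
  shows "\<exists>K\<ge>0. \<forall>f. fin_energy c f \<longrightarrow> (cmod (f z - f o0))\<^sup>2 \<le> K * qe c f"
proof -
  obtain K where K: "K \<ge> 0" "\<And>f. fin_energy c f \<Longrightarrow> cmod (f z - f o0) \<le> K * sqrt (qe c f)"
    using path_bound[OF c cn] by blast
  show ?thesis
  proof (intro exI[of _ "K\<^sup>2"] conjI allI impI)
    show "0 \<le> K\<^sup>2" by simp
    fix f assume f: "fin_energy c f"
    have "(cmod (f z - f o0))\<^sup>2 \<le> (K * sqrt (qe c f))\<^sup>2" using K(2)[OF f] by (simp add: power_mono)
    also have "\<dots> = K\<^sup>2 * qe c f" using qe_nonneg[OF c, of f] by (simp add: power_mult_distrib)
    finally show "(cmod (f z - f o0))\<^sup>2 \<le> K\<^sup>2 * qe c f" .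
  qed
qed

lemma min_exists:
  assumes c: "conductance c" and cn: "connected_net c" and lf: "locally_finite_net c" and xo: "x \<noteq> o0"
  shows "\<exists>u. fin_energy c u \<and> u o0 = 0 \<and> u x = 1 \<and>
           (\<forall>w. fin_energy c w \<and> w o0 = 0 \<and> w x = 1 \<longrightarrow> qe c u \<le> qe c w)"
proof -
  define A where "A = {u. fin_energy c u \<and> u o0 = 0 \<and> u x = 1}"
  define m where "m = Inf (qe c ` A)"
  have dA: "delta x \<in> A" using xo fe_delta[OF c lf] by (simp add: A_def delta_def)
  have bdd: "bdd_below (qe c ` A)" unfolding bdd_below_def using qe_nonneg[OF c] by blast
  have mle: "m \<le> qe c u" if "u \<in> A" for u unfolding m_def using bdd that by (simp add: cInf_lower)
  have ex1: "\<exists>u\<in>A. qe c u < m + inverse (real (Suc n))" for n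
  proof -
    have ne: "qe c ` A \<noteq> {}" using dA by blast
    have "\<exists>y\<in>qe c ` A. y < m + inverse (real (Suc n))" by (rule cInf_lessD[OF ne]) (simp add: m_def)
    then show ?thesis by auto
  qed
  have ex2: "\<forall>n. \<exists>u. u \<in> A \<and> qe c u < m + inverse (real (Suc n))" using ex1 by blast
  obtain U where U: "\<forall>n. U n \<in> A \<and> qe c (U n) < m + inverse (real (Suc n))"
    using choice[OF ex2] by blast
  have UA: "\<And>n. U n \<in> A" and Uq: "\<And>n. qe c (U n) < m + inverse (real (Suc n))" using U by auto
  have Ufe: "\<And>n. fin_energy c (U n)" and U0: "\<And>n. U n o0 = 0" and U1: "\<And>n. U n x = 1"
    using UA by (auto simp: A_def)
  have cq: "qe c (\<lambda>z. U n z - U k z) \<le> 2 * inverse (real (Suc n)) + 2 * inverse (real (Suc k))" for n k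
  proof -
    define mid where "mid = (\<lambda>z. (1/2) * (U n z + U k z))"
    have fm: "fin_energy c mid" unfolding mid_def by (rule fe_scal[OF fe_add[OF c Ufe Ufe]])
    have "mid \<in> A" using fm U0 U1 by (simp add: A_def mid_def)
    then have "m \<le> qe c mid" by (rule mle)
    moreover have "qe c mid = (1/4) * qe c (\<lambda>z. U n z + U k z)"
      unfolding mid_def by (subst qe_scal[OF fe_add[OF c Ufe Ufe]]) (simp add: power2_eq_square)
    moreover have "qe c (\<lambda>z. U n z + U k z) + qe c (\<lambda>z. U n z - U k z) = 2 * qe c (U n) + 2 * qe c (U k)"
      by (rule qe_par[OF c Ufe Ufe])
    ultimately show ?thesis using Uq[of n] Uq[of k] by linarith
  qed
  have conv: "convergent (\<lambda>n. U n z)" for z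
  proof -
    obtain K where K: "K \<ge> 0" "\<And>f. fin_energy c f \<Longrightarrow> (cmod (f z - f o0))\<^sup>2 \<le> K * qe c f"
      using path_bound2[OF c cn] by blast
    have "Cauchy (\<lambda>n. U n z)"
    proof (rule CauchyI)
      fix e :: real assume e: "0 < e"
      have "0 < e\<^sup>2 / (4 * (K + 1))" using e K by simp
      then obtain N where N: "inverse (real (Suc N)) < e\<^sup>2 / (4 * (K + 1))"
        using reals_Archimedean by blast
      show "\<exists>M. \<forall>n\<ge>M. \<forall>k\<ge>M. norm (U n z - U k z) < e"
      proof (intro exI[of _ N] allI impI)
        fix n k assume nN: "N \<le> n" and kN: "N \<le> k"
        have i1: "inverse (real (Suc n)) \<le> inverse (real (Suc N))" using nN by (simp add: field_simps)
        have i2: "inverse (real (Suc k)) \<le> inverse (real (Suc N))" using kN by (simp add: field_simps)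
        have fD: "fin_energy c (\<lambda>z. U n z - U k z)" by (rule fe_minus[OF c Ufe Ufe])
        have "(cmod (U n z - U k z))\<^sup>2 = (cmod ((U n z - U k z) - (U n o0 - U k o0)))\<^sup>2" using U0 by simp
        also have "\<dots> \<le> K * qe c (\<lambda>z. U n z - U k z)" using K(2)[OF fD] by simp
        also have "\<dots> \<le> K * (4 * inverse (real (Suc N)))"
        proof (rule mult_left_mono[OF _ K(1)])
          show "qe c (\<lambda>z. U n z - U k z) \<le> 4 * inverse (real (Suc N))" using cq[of n k] i1 i2 by linarith
        qed
        also have "\<dots> \<le> (K + 1) * (4 * inverse (real (Suc N)))" by simp
        also have "\<dots> < (K + 1) * (4 * (e\<^sup>2 / (4 * (K + 1))))"
          using N K(1) by (intro mult_strict_left_mono) auto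
        also have "\<dots> = e\<^sup>2" using K(1) by (simp add: field_simps)
        finally have "(cmod (U n z - U k z))\<^sup>2 < e\<^sup>2" .
        then show "norm (U n z - U k z) < e" using e by (simp add: power_less_imp_less_base)
      qed
    qed
    then show ?thesis by (simp add: Cauchy_convergent_iff)
  qed
  define u where "u = (\<lambda>z. lim (\<lambda>n. U n z))"
  have lim: "(\<lambda>n. U n z) \<longlonglongrightarrow> u z" for z
    using conv[of z] by (simp add: u_def convergent_LIMSEQ_iff)
  have u0: "u o0 = 0" using lim[of o0] U0 by (simp add: LIMSEQ_const_iff)
  have u1: "u x = 1" using lim[of x] U1 by (simp add: LIMSEQ_const_iff)
  have fs: "sum (qsum c u) F \<le> m" if F: "finite F" for F
  proof -
    have l1: "(\<lambda>n. sum (qsum c (U n)) F) \<longlonglongrightarrow> sum (qsum c u) F"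
    proof (rule tendsto_sum)
      fix p :: "'a \<times> 'a" obtain a b where p: "p = (a,b)" by (cases p)
      show "(\<lambda>n. qsum c (U n) p) \<longlonglongrightarrow> qsum c u p"
        unfolding p qsum_def prod.case by (intro tendsto_intros lim)
    qed
    have l2: "(\<lambda>n. m + inverse (real (Suc n))) \<longlonglongrightarrow> m"
      using tendsto_add[OF tendsto_const LIMSEQ_inverse_real_of_nat, of m] by simp
    have "sum (qsum c (U n)) F \<le> m + inverse (real (Suc n))" for n
    proof -
      have "sum (qsum c (U n)) F \<le> infsum (qsum c (U n)) UNIV"
        using Ufe[of n] F by (intro finite_sum_le_infsum) (auto simp: fe_def' qsum_nonneg[OF c])
      then show ?thesis using Uq[of n] by (simp add: qe_def)
    qed
    then show ?thesis using LIMSEQ_le[OF l1 l2] by blast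
  qed
  have ufe: "fin_energy c u" unfolding fe_def'
  proof (rule nonneg_bdd_above_summable_on)
    show "bdd_above (sum (qsum c u) ` {F. F \<subseteq> UNIV \<and> finite F})"
      unfolding bdd_above_def using fs by blast
  qed (simp add: qsum_nonneg[OF c])
  have uq: "qe c u \<le> m" unfolding qe_def
    by (rule infsum_le_finite_sums) (use ufe fs in \<open>auto simp: fe_def'\<close>)
  show ?thesis
  proof (intro exI[of _ u] conjI allI impI)
    show "fin_energy c u" "u o0 = 0" "u x = 1" by (fact ufe u0 u1)+
    fix w assume "fin_energy c w \<and> w o0 = 0 \<and> w x = 1"
    then have "w \<in> A" by (simp add: A_def)
    then show "qe c u \<le> qe c w" using uq mle by force
  qed
qed

lemma energy_zero1: "energy c (\<lambda>z. 0) u = 0"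
  by (simp add: energy_def case_prod_unfold)

lemma vx_exists:
  assumes nw: "network c"
  shows "\<exists>v. is_vx c o0 x v"
proof -
  have c: "conductance c" and cn: "connected_net c" and lf: "locally_finite_net c"
    using nw by (auto simp: network_def)
  show ?thesis
  proof (cases "x = o0")
    case True
    then show ?thesis by (intro exI[of _ "\<lambda>z. 0"]) (simp add: is_vx_def fe_zero energy_zero1)
  next
    case xo: False
    obtain u where ufe: "fin_energy c u" and u0: "u o0 = 0" and u1: "u x = 1"
      and umin: "\<And>w. fin_energy c w \<Longrightarrow> w o0 = 0 \<Longrightarrow> w x = 1 \<Longrightarrow> qe c u \<le> qe c w"
      using min_exists[OF c cn lf xo] by blast
    define m where "m = qe c u"
    have m0: "0 \<le> m" using qe_nonneg[OF c] by (simp add: m_def)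
    have mpos: "m \<noteq> 0"
    proof
      assume "m = 0"
      then have "u x = u o0" using qe_zero_const[OF c cn ufe] by (simp add: m_def)
      with u0 u1 show False by simp
    qed
    have Euu: "energy c u u = complex_of_real (m / 2)" using energy_self[OF ufe] by (simp add: m_def)
    have var: "energy c u h = 0" if hfe: "fin_energy c h" and h0: "h o0 = 0" and h1: "h x = 0" for h
    proof -
      define e where "e = energy c u h"
      define h' where "h' = (\<lambda>z. cnj e * h z)"
      define r where "r = (cmod e)\<^sup>2"
      define q where "q = qe c h'"
      have hfe': "fin_energy c h'" unfolding h'_def by (rule fe_scal[OF hfe])
      have q0: "0 \<le> q" using qe_nonneg[OF c] by (simp add: q_def)
      have r0: "0 \<le> r" by (simp add: r_def)
      have Euh: "energy c u h' = complex_of_real r"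
        unfolding h'_def energy_scal2 r_def e_def[symmetric] by (simp add: complex_norm_square mult.commute del: of_real_power)
      have Ehu: "energy c h' u = complex_of_real r" using Euh energy_cnj[of c h' u] by simp
      have Ehh: "energy c h' h' = complex_of_real (q / 2)" using energy_self[OF hfe'] by (simp add: q_def)
      have ineq: "0 \<le> 4 * t * r + t\<^sup>2 * q" for t :: real
      proof -
        define W where "W = (\<lambda>z. u z + complex_of_real t * h' z)"
        have th: "fin_energy c (\<lambda>z. complex_of_real t * h' z)" by (rule fe_scal[OF hfe'])
        have Wfe: "fin_energy c W" unfolding W_def by (rule fe_add[OF c ufe th])
        have "energy c W W = energy c u W + cnj (complex_of_real t) * energy c h' W"
          unfolding W_def[of] 
          by (subst energy_add1[OF c Wfe[unfolded W_def] ufe th]) (simp add: energy_scal1)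
        also have "energy c u W = energy c u u + complex_of_real t * energy c u h'"
          unfolding W_def by (simp add: energy_add2[OF c ufe ufe th] energy_scal2)
        also have "energy c h' W = energy c h' u + complex_of_real t * energy c h' h'"
          unfolding W_def by (simp add: energy_add2[OF c hfe' ufe th] energy_scal2)
        finally have "energy c W W = complex_of_real (m / 2 + t * r + t * (r + t * (q / 2)))"
          by (simp add: Euu Euh Ehu Ehh)
        then have "complex_of_real (qe c W / 2) = complex_of_real (m / 2 + t * r + t * (r + t * (q / 2)))"
          using energy_self[OF Wfe] by metis
        then have "qe c W / 2 = m / 2 + t * r + t * (r + t * (q / 2))" by (simp only: of_real_eq_iff)
        moreover have "m \<le> qe c W" unfolding m_def
          by (rule umin[OF Wfe]) (simp_all add: W_def h'_def u0 u1 h0 h1)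
        ultimately show ?thesis by (simp add: power2_eq_square algebra_simps)
      qed
      have "r = 0"
      proof (rule ccontr)
        assume rn: "r \<noteq> 0"
        then have rp: "0 < r" using r0 by simp
        define s where "s = r / (q + 1)"
        have sp: "0 < s" using rp q0 by (simp add: s_def)
        have "0 \<le> 4 * (- s) * r + (- s)\<^sup>2 * q" by (rule ineq)
        then have "0 \<le> s * (s * q - 4 * r)" by (simp add: power2_eq_square algebra_simps)
        then have a: "0 \<le> s * q - 4 * r" using sp by (simp add: zero_le_mult_iff)
        have "s * q \<le> r"
        proof -
          have "s * q = r * (q / (q + 1))" by (simp add: s_def)
          also have "\<dots> \<le> r * 1" using r0 q0 by (intro mult_left_mono) auto
          finally show ?thesis by simp
        qed
        with a rp show False by linarith
      qed
      then show ?thesis by (simp add: r_def e_def)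
    qed
    define v where "v = (\<lambda>z. complex_of_real (2 / m) * u z)"
    show ?thesis
    proof (intro exI[of _ v])
      show "is_vx c o0 x v" unfolding is_vx_def
      proof (intro conjI allI impI)
        show "fin_energy c v" unfolding v_def by (rule fe_scal[OF ufe])
        fix f assume ffe: "fin_energy c f"
        define d where "d = f x - f o0"
        have f1: "fin_energy c (\<lambda>z. f z + - f o0)" using ffe fe_cong[of "\<lambda>z. f z + - f o0" f c] by simp
        have f2: "fin_energy c (\<lambda>z. - d * u z)" by (rule fe_scal[OF ufe])
        have "energy c u (\<lambda>z. (f z + - f o0) + - d * u z) = 0"
          by (rule var[OF fe_add[OF c f1 f2]]) (simp_all add: u0 u1 d_def)
        moreover have "energy c u (\<lambda>z. (f z + - f o0) + - d * u z) = energy c u (\<lambda>z. f z + - f o0) + energy c u (\<lambda>z. - d * u z)"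
          by (rule energy_add2[OF c ufe f1 f2])
        moreover have "energy c u (\<lambda>z. f z + - f o0) = energy c u f" by (rule energy_cong2) simp
        moreover have "energy c u (\<lambda>z. - d * u z) = - d * complex_of_real (m / 2)"
          using energy_scal2[of c u "- d" u] Euu by simp
        ultimately have "energy c u f + - d * complex_of_real (m / 2) = 0" by simp
        then have "energy c u f = d * complex_of_real (m / 2)"
          by (simp add: add_eq_0_iff)
        moreover have "energy c v f = cnj (complex_of_real (2 / m)) * energy c u f"
          unfolding v_def by (rule energy_scal1)
        ultimately have h1: "complex_of_real m * f o0 + 2 * energy c u f = complex_of_real m * f x"
          and h2: "complex_of_real m * energy c v f = 2 * energy c u f"
          using mpos by (simp_all add: d_def field_simps)
        have "complex_of_real m * (f o0 + energy c v f) = complex_of_real m * f x"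
          using h1 h2 by (simp add: distrib_left)
        then have "f o0 + energy c v f = f x" using mpos by simp
        then show "energy c v f = f x - f o0" by (simp add: algebra_simps)
      qed
    qed
  qed
qed

lemma vx_is:
  assumes "network c"
  shows "is_vx c o0 x (vx c o0 x)"
  unfolding vx_def using vx_exists[OF assms] by (rule someI_ex)

lemma lap_shift: "laplacian c (\<lambda>z. f z + k) y = laplacian c f y"
  by (simp add: laplacian_def)

lemma lap_cong:
  assumes "\<And>z. g z = f z + k"
  shows "laplacian c g y = laplacian c f y"
proof -
  have "g = (\<lambda>z. f z + k)" using assms by (rule ext)
  then show ?thesis by (simp only: lap_shift)
qed

lemma lap_sum:
  assumes S: "finite S"
  shows "laplacian c (\<lambda>z. \<Sum>x\<in>S. a x * f x z) y = (\<Sum>x\<in>S. a x * laplacian c (f x) y)"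
proof -
  define N where "N = {y'. 0 < c y y'}"
  have e: "complex_of_real (c y y') * ((\<Sum>x\<in>S. a x * f x y) - (\<Sum>x\<in>S. a x * f x y')) =
      (\<Sum>x\<in>S. a x * (complex_of_real (c y y') * (f x y - f x y')))" for y'
    by (simp add: sum_subtractf[symmetric] sum_distrib_left algebra_simps)
  have "laplacian c (\<lambda>z. \<Sum>x\<in>S. a x * f x z) y = (\<Sum>y'\<in>N. \<Sum>x\<in>S. a x * (complex_of_real (c y y') * (f x y - f x y')))"
    unfolding laplacian_def N_def[symmetric] by (simp only: e)
  also have "\<dots> = (\<Sum>x\<in>S. \<Sum>y'\<in>N. a x * (complex_of_real (c y y') * (f x y - f x y')))"
    by (rule sum.swap)
  also have "\<dots> = (\<Sum>x\<in>S. a x * laplacian c (f x) y)"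
    unfolding laplacian_def N_def[symmetric] by (simp only: sum_distrib_left)
  finally show ?thesis .
qed

lemma lap_vx:
  assumes nw: "network c"
  shows "laplacian c (vx c o0 x) y = delta y x - delta y o0"
proof -
  have c: "conductance c" and lf: "locally_finite_net c" using nw by (auto simp: network_def)
  have "laplacian c (vx c o0 x) y = energy c (delta y) (vx c o0 x)" by (rule lap_delta[OF c lf, symmetric])
  also have "\<dots> = cnj (energy c (vx c o0 x) (delta y))" by (rule energy_cnj)
  also have "energy c (vx c o0 x) (delta y) = delta y x - delta y o0"
    using vx_is[OF nw, of o0 x] fe_delta[OF c lf, of y] by (simp add: is_vx_def)
  finally show ?thesis by (simp add: delta_def)
qed

theorem lemma3p10:
  fixes c b :: "'a::countable \<Rightarrow> 'a \<Rightarrow> real" and o0 :: 'a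
  assumes "network c" and "network b" and "\<forall>x y. b x y \<le> c x y"
  shows "\<forall>u \<in> lap_dom b o0.
           (\<exists>w. incl_adj c b u w) \<and>
           (\<forall>w. incl_adj c b u w \<longrightarrow>
                 w \<in> lap_dom c o0 \<and> mod_const (laplacian b u) (laplacian c w))"
proof
  fix u assume "u \<in> lap_dom b o0"
  then obtain S a where S: "finite S" and mc: "mod_const u (\<lambda>z. \<Sum>x\<in>S. a x * vx b o0 x z)"
    by (auto simp: lap_dom_def)
  define Ub where "Ub = (\<lambda>z. \<Sum>x\<in>S. a x * vx b o0 x z)"
  obtain k where uk: "\<And>z. u z = Ub z + k" using mc by (auto simp: mod_const_def Ub_def)
  have nc: "network c" and nb: "network b" by fact+
  have c: "conductance c" and cn: "connected_net c" using nc by (auto simp: network_def)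
  have bc: "conductance b" using nb by (auto simp: network_def)
  have le: "\<And>x y. b x y \<le> c x y" using assms(3) by blast
  define W0 where "W0 = (\<lambda>z. \<Sum>x\<in>S. a x * vx c o0 x z)"
  have vc: "\<And>x. is_vx c o0 x (vx c o0 x)" by (rule vx_is[OF nc])
  have vb: "\<And>x. is_vx b o0 x (vx b o0 x)" by (rule vx_is[OF nb])
  have W0fe: "fin_energy c W0" unfolding W0_def using vc by (intro fe_sum[OF c S]) (simp add: is_vx_def)
  have adj: "incl_adj c b u W0" unfolding incl_adj_def
  proof (intro conjI allI impI)
    show "fin_energy c W0" by (fact W0fe)
    fix z assume zc: "fin_energy c z"
    have zb: "fin_energy b z" by (rule fe_mono[OF bc le zc])
    have "energy c W0 z = (\<Sum>x\<in>S. cnj (a x) * energy c (vx c o0 x) z)"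
      unfolding W0_def by (rule energy_sum1[OF c S _ zc]) (use vc in \<open>simp add: is_vx_def\<close>)
    also have "\<dots> = (\<Sum>x\<in>S. cnj (a x) * (z x - z o0))" using vc zc by (simp add: is_vx_def)
    also have "\<dots> = (\<Sum>x\<in>S. cnj (a x) * energy b (vx b o0 x) z)" using vb zb by (simp add: is_vx_def)
    also have "\<dots> = energy b Ub z"
      unfolding Ub_def by (rule energy_sum1[OF bc S _ zb, symmetric]) (use vb in \<open>simp add: is_vx_def\<close>)
    also have "\<dots> = energy b u z" by (rule energy_cong1) (simp add: uk)
    finally show "energy c W0 z = energy b u z" .
  qed
  have lapb: "laplacian b u y = (\<Sum>x\<in>S. a x * (delta y x - delta y o0))" for y
  proof -
    have "laplacian b u y = laplacian b Ub y" by (rule lap_cong) (rule uk)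
    also have "\<dots> = (\<Sum>x\<in>S. a x * laplacian b (vx b o0 x) y)" unfolding Ub_def by (rule lap_sum[OF S])
    finally show ?thesis by (simp add: lap_vx[OF nb])
  qed
  show "(\<exists>w. incl_adj c b u w) \<and>
           (\<forall>w. incl_adj c b u w \<longrightarrow> w \<in> lap_dom c o0 \<and> mod_const (laplacian b u) (laplacian c w))"
  proof (intro conjI allI impI)
    show "\<exists>w. incl_adj c b u w" using adj by blast
    fix w assume wadj: "incl_adj c b u w"
    have wfe: "fin_energy c w" using wadj by (simp add: incl_adj_def)
    define D where "D = (\<lambda>z. w z - W0 z)"
    have Dfe: "fin_energy c D" unfolding D_def by (rule fe_minus[OF c wfe W0fe])
    have "energy c D D = energy c w D - energy c W0 D" unfolding D_def[of]
      by (subst energy_minus1[OF c Dfe[unfolded D_def] wfe W0fe]) simp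
    also have "\<dots> = 0" using wadj adj Dfe by (simp add: incl_adj_def)
    finally have "complex_of_real (qe c D / 2) = 0" using energy_self[OF Dfe] by simp
    then have "qe c D = 0" by simp
    then have Dc: "\<And>z. D z = D o0" using qe_zero_const[OF c cn Dfe] by blast
    have wk: "\<And>z. w z = W0 z + (w o0 - W0 o0)" using Dc by (simp add: D_def algebra_simps)
    have "mod_const w (\<lambda>z. \<Sum>x\<in>S. a x * vx c o0 x z)"
      unfolding mod_const_def W0_def[symmetric] using wk by blast
    then show "w \<in> lap_dom c o0" unfolding lap_dom_def using S by blast
    have "laplacian c w y = (\<Sum>x\<in>S. a x * (delta y x - delta y o0))" for y
    proof -
      have "laplacian c w y = laplacian c W0 y" by (rule lap_cong) (rule wk)
      also have "\<dots> = (\<Sum>x\<in>S. a x * laplacian c (vx c o0 x) y)" unfolding W0_def by (rule lap_sum[OF S])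
      finally show ?thesis by (simp add: lap_vx[OF nc])
    qed
    then show "mod_const (laplacian b u) (laplacian c w)" unfolding mod_const_def
      using lapb by (intro exI[of _ 0]) simp
  qed
qed

end
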